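(* For every integer $k\ge 2$ and every positive integer $n$, \[ \mathrm{ex}_3\big(n, C^{(3)}_{2k}\big)\le t_{2k}(n)+\mathrm{ex}(n,C_{2k}). \]
   Context: A Berge cycle of length $m$ in a hypergraph is a family of $m$ distinct hyperedges $H_0,\dots,H_{m-1}$ for which there exist distinct vertices $v_0,\dots,v_{m-1}$ with $\{v_i,v_{i+1}\}\subset H_i$ for $0\le i\le m-1$ (indices mod $m$). $\mathrm{ex}_3(n,C^{(3)}_m)$ is the maximum number of hyperedges in a 3-uniform hypergraph on $n$ vertices with no Berge cycle of length $m$. $\mathrm{ex}(n,C_{2k})$ is the maximum number of edges of a simple graph on $n$ vertices with no cycle of length $2k$. $t_\ell(n)$ is the maximum number of triangles in a simple graph on $n$ vertices containing no cycle of length $\ell$. *)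

theory Defs
  imports Main
begin

definition hypergraph3 :: "nat \<Rightarrow> nat set set \<Rightarrow> bool" where
  "hypergraph3 n H \<longleftrightarrow> (\<forall>e\<in>H. e \<subseteq> {..<n} \<and> card e = 3)"

definition simple_graph :: "nat \<Rightarrow> nat set set \<Rightarrow> bool" where
  "simple_graph n G \<longleftrightarrow> (\<forall>e\<in>G. e \<subseteq> {..<n} \<and> card e = 2)"

definition has_berge_cycle :: "nat set set \<Rightarrow> nat \<Rightarrow> bool" where
  "has_berge_cycle H m \<longleftrightarrow>
     (\<exists>(v :: nat \<Rightarrow> nat) (E :: nat \<Rightarrow> nat set).
        inj_on v {..<m} \<and> inj_on E {..<m} \<and>
        (\<forall>i<m. E i \<in> H \<and> {v i, v ((i + 1) mod m)} \<subseteq> E i))"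

definition has_cycle :: "nat set set \<Rightarrow> nat \<Rightarrow> bool" where
  "has_cycle G m \<longleftrightarrow>
     (\<exists>v :: nat \<Rightarrow> nat. inj_on v {..<m} \<and> (\<forall>i<m. {v i, v ((i + 1) mod m)} \<in> G))"

definition num_triangles :: "nat set set \<Rightarrow> nat" where
  "num_triangles G = card {T. card T = 3 \<and> (\<forall>x\<in>T. \<forall>y\<in>T. x \<noteq> y \<longrightarrow> {x, y} \<in> G)}"

definition ex3_berge :: "nat \<Rightarrow> nat \<Rightarrow> nat" where
  "ex3_berge n m = Max {card H | H. hypergraph3 n H \<and> \<not> has_berge_cycle H m}"

definition ex_cycle :: "nat \<Rightarrow> nat \<Rightarrow> nat" where
  "ex_cycle n m = Max {card G | G. simple_graph n G \<and> \<not> has_cycle G m}"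

definition t_cycle :: "nat \<Rightarrow> nat \<Rightarrow> nat" where
  "t_cycle l n = Max {num_triangles G | G. simple_graph n G \<and> \<not> has_cycle G l}"

end

theory Submission
  imports Defs
begin

lemma mod_succ: "(i::nat) < m \<Longrightarrow> (i+1) mod m = (if i+1=m then 0 else i+1)"
  by auto

lemma pair_inj:
  fixes v :: "nat \<Rightarrow> nat"
  assumes m: "m \<ge> 3" and inj: "inj_on v {..<m}" and i: "i<m" and j: "j<m"
    and eq: "{v i, v ((i+1) mod m)} = {v j, v ((j+1) mod m)}"
  shows "i = j"
proof (rule ccontr)
  assume ne: "i \<noteq> j"
  have i1: "(i+1) mod m < m" "(j+1) mod m < m" using i j by auto
  have "v i \<noteq> v j" using inj ne i j by (meson inj_on_contraD lessThan_iff)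
  hence a: "v i = v ((j+1) mod m)" and b: "v ((i+1) mod m) = v j" using eq by (auto simp: doubleton_eq_iff)
  have a': "i = (j+1) mod m" using inj_onD[OF inj a] i i1 by auto
  have b': "(i+1) mod m = j" using inj_onD[OF inj b] j i1 by auto
  show False
  proof (cases "i+1 = m")
    case True
    hence "j = 0" using b' by simp
    hence "i = 1 mod m" using a' by simp
    thus False using m True by simp
  next
    case False
    hence jj: "j = i+1" using b' mod_succ[OF i] by simp
    show False
    proof (cases "j+1 = m")
      case True
      hence "i = 0" using a' by simp
      thus False using m True jj by simp
    next
      case False
      hence "i = j+1" using a' mod_succ[OF j] by simp
      thus False using jj by simp
    qed
  qed
qed

lemma other:
  assumes "card T = 3" "x \<in> T" shows "\<exists>y\<in>T. y \<noteq> x"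
proof (rule ccontr)
  assume "\<not> ?thesis"
  hence "T \<subseteq> {x}" by auto
  hence "card T \<le> 1" using card_mono[of "{x}" T] by simp
  thus False using assms by simp
qed

lemma card_pow_bound:
  assumes "X \<subseteq> Pow {..<n}" shows "card X \<le> 2^n"
proof -
  have "card X \<le> card (Pow {..<(n::nat)})" using assms by (intro card_mono) auto
  thus ?thesis by (simp add: card_Pow)
qed

theorem theorem2:
  fixes k n :: nat
  assumes "k \<ge> 2" and "n \<ge> 1"
  shows "ex3_berge n (2 * k) \<le> t_cycle (2 * k) n + ex_cycle n (2 * k)"
proof -
  define m where "m = 2*k"
  have m3: "m \<ge> 3" using assms(1) unfolding m_def by simp
  have main: "card H \<le> t_cycle m n + ex_cycle n m"
    if hH: "hypergraph3 n H" and nb: "\<not> has_berge_cycle H m" for H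
  proof -
    define \<Omega> where "\<Omega> = {(h,e). h\<in>H \<and> e\<subseteq>h \<and> card e = 2}"
    have HP: "H \<subseteq> Pow {..<n}" using hH unfolding hypergraph3_def by auto
    have finH: "finite H" using HP by (meson finite_Pow_iff finite_lessThan finite_subset)
    have finO: "finite \<Omega>"
    proof -
      have "\<Omega> \<subseteq> H \<times> Pow {..<n}" using HP unfolding \<Omega>_def by auto
      thus ?thesis using finH by (meson finite_Pow_iff finite_SigmaI finite_lessThan finite_subset)
    qed
    define P where "P M \<longleftrightarrow> M \<subseteq> \<Omega> \<and> inj_on fst M \<and> inj_on snd M" for M
    have "P {}" unfolding P_def by auto
    moreover have "\<forall>M. P M \<longrightarrow> card M < card \<Omega> + 1"
      using finO unfolding P_def by (auto simp: less_Suc_eq_le intro: card_mono)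
    ultimately obtain M where PM: "P M" and Mmax: "\<And>M'. P M' \<Longrightarrow> card M' \<le> card M"
      using ex_has_greatest_nat[of P "{}" card "card \<Omega> + 1"] by blast
    have MO: "M \<subseteq> \<Omega>" and if1: "inj_on fst M" and if2: "inj_on snd M" using PM P_def by auto
    have finM: "finite M" using MO finO finite_subset by blast
    define G where "G = snd ` M"
    define D where "D = fst ` M"
    have DH: "D \<subseteq> H" using MO unfolding D_def \<Omega>_def by auto
    have cD: "card D = card G" unfolding D_def G_def
      using card_image[OF if1] card_image[OF if2] by simp
    have sg: "simple_graph n G" unfolding simple_graph_def G_def
    proof
      fix e assume "e \<in> snd ` M"
      then obtain h where "(h,e) \<in> M" by force
      hence "h \<in> H" "e \<subseteq> h" "card e = 2" using MO unfolding \<Omega>_def by auto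
      thus "e \<subseteq> {..<n} \<and> card e = 2" using HP by blast
    qed
    have maxl: "e \<in> G" if h: "h \<in> H - D" and e: "e \<subseteq> h" "card e = 2" for h e
    proof (rule ccontr)
      assume ne: "e \<notin> G"
      have nM: "(h,e) \<notin> M" using h unfolding D_def by force
      have "P (insert (h,e) M)" using PM h e ne nM unfolding P_def \<Omega>_def G_def D_def
        by (auto simp: inj_on_insert image_iff)
      hence "card (insert (h,e) M) \<le> card M" by (rule Mmax)
      thus False using nM finM by simp
    qed
    define TS where "TS = {T. card T = 3 \<and> (\<forall>x\<in>T. \<forall>y\<in>T. x \<noteq> y \<longrightarrow> {x, y} \<in> G)}"
    have TSsub: "TS \<subseteq> Pow {..<n}"
    proof
      fix T assume T: "T \<in> TS"
      have "T \<subseteq> {..<n}"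
      proof
        fix x assume x: "x \<in> T"
        have "card T = 3" using T TS_def by auto
        then obtain y where "y \<in> T" "y \<noteq> x" using other[OF _ x] by blast
        hence "{x,y} \<in> G" using T x TS_def by auto
        thus "x \<in> {..<n}" using sg unfolding simple_graph_def by auto
      qed
      thus "T \<in> Pow {..<n}" by auto
    qed
    have finTS: "finite TS" using TSsub by (meson finite_Pow_iff finite_lessThan finite_subset)
    have "H - D \<subseteq> TS"
    proof
      fix h assume h: "h \<in> H - D"
      have "card h = 3" using h hH hypergraph3_def by auto
      moreover have "{x,y} \<in> G" if "x \<in> h" "y \<in> h" "x \<noteq> y" for x y
        using maxl[OF h, of "{x,y}"] that by auto
      ultimately show "h \<in> TS" unfolding TS_def by auto
    qed
    hence c1: "card (H - D) \<le> num_triangles G"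
      unfolding num_triangles_def TS_def[symmetric] using finTS by (rule card_mono[rotated])
    have nc: "\<not> has_cycle G m"
    proof
      assume "has_cycle G m"
      then obtain v where vi: "inj_on v {..<m}" and vG: "\<forall>i<m. {v i, v ((i + 1) mod m)} \<in> G"
        unfolding has_cycle_def by auto
      have ex: "\<forall>i\<in>{..<m}. \<exists>h. (h, {v i, v ((i + 1) mod m)}) \<in> M"
        using vG unfolding G_def by force
      then obtain E where E: "\<forall>i\<in>{..<m}. (E i, {v i, v ((i + 1) mod m)}) \<in> M"
        using bchoice[OF ex] by blast
      have Ei: "inj_on E {..<m}"
      proof (rule inj_onI)
        fix i j assume i: "i \<in> {..<m}" and j: "j \<in> {..<m}" and eq: "E i = E j"
        have "(E i, {v i, v ((i + 1) mod m)}) = (E j, {v j, v ((j + 1) mod m)})"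
        proof (rule inj_onD[OF if1])
          show "fst (E i, {v i, v ((i + 1) mod m)}) = fst (E j, {v j, v ((j + 1) mod m)})" using eq by simp
        qed (use E i j in auto)
        thus "i = j" using pair_inj[OF m3 vi] i j by auto
      qed
      have "\<forall>i<m. E i \<in> H \<and> {v i, v ((i + 1) mod m)} \<subseteq> E i"
        using E MO unfolding \<Omega>_def by auto
      hence "has_berge_cycle H m" unfolding has_berge_cycle_def using vi Ei by blast
      thus False using nb by simp
    qed
    have c2: "num_triangles G \<le> t_cycle m n"
      unfolding t_cycle_def
    proof (rule Max_ge)
      have "{num_triangles G |G. simple_graph n G \<and> \<not> has_cycle G m} \<subseteq> {..2^n}"
      proof
        fix x assume "x \<in> {num_triangles G |G. simple_graph n G \<and> \<not> has_cycle G m}"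
        then obtain G' where x: "x = num_triangles G'" "simple_graph n G'" by auto
        have "{T. card T = 3 \<and> (\<forall>x\<in>T. \<forall>y\<in>T. x \<noteq> y \<longrightarrow> {x, y} \<in> G')} \<subseteq> Pow {..<n}"
        proof
          fix T assume T: "T \<in> {T. card T = 3 \<and> (\<forall>x\<in>T. \<forall>y\<in>T. x \<noteq> y \<longrightarrow> {x, y} \<in> G')}"
          have "T \<subseteq> {..<n}"
          proof
            fix x assume xT: "x \<in> T"
            have "card T = 3" using T by auto
            then obtain y where "y \<in> T" "y \<noteq> x" using other[OF _ xT] by blast
            hence "{x,y} \<in> G'" using T xT by auto
            thus "x \<in> {..<n}" using x(2) unfolding simple_graph_def by auto
          qed
          thus "T \<in> Pow {..<n}" by auto
        qed
        hence "num_triangles G' \<le> 2^n" unfolding num_triangles_def by (rule card_pow_bound)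
        thus "x \<in> {..2^n}" using x(1) by simp
      qed
      thus "finite {num_triangles G |G. simple_graph n G \<and> \<not> has_cycle G m}"
        using finite_subset by blast
      show "num_triangles G \<in> {num_triangles G |G. simple_graph n G \<and> \<not> has_cycle G m}"
        using sg nc by blast
    qed
    have c3: "card G \<le> ex_cycle n m"
      unfolding ex_cycle_def
    proof (rule Max_ge)
      have "{card G |G. simple_graph n G \<and> \<not> has_cycle G m} \<subseteq> {..2^n}"
      proof
        fix x assume "x \<in> {card G |G. simple_graph n G \<and> \<not> has_cycle G m}"
        then obtain G' where x: "x = card G'" "simple_graph n G'" by auto
        have "G' \<subseteq> Pow {..<n}" using x(2) unfolding simple_graph_def by auto
        hence "card G' \<le> 2^n" by (rule card_pow_bound)
        thus "x \<in> {..2^n}" using x(1) by simp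
      qed
      thus "finite {card G |G. simple_graph n G \<and> \<not> has_cycle G m}"
        using finite_subset by blast
      show "card G \<in> {card G |G. simple_graph n G \<and> \<not> has_cycle G m}"
        using sg nc by blast
    qed
    have "card H = card D + card (H - D)"
    proof -
      have fD: "finite D" using DH finH finite_subset by blast
      have "card (H - D) = card H - card D" using card_Diff_subset[OF fD DH] .
      moreover have "card D \<le> card H" using card_mono[OF finH DH] .
      ultimately show ?thesis by simp
    qed
    thus ?thesis using cD c1 c2 c3 by linarith
  qed
  have S: "{card H | H. hypergraph3 n H \<and> \<not> has_berge_cycle H m} \<subseteq> {..t_cycle m n + ex_cycle n m}"
    using main by auto
  have ne: "{card H | H. hypergraph3 n H \<and> \<not> has_berge_cycle H m} \<noteq> {}"
  proof -
    have "hypergraph3 n {}" "\<not> has_berge_cycle {} m"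
      using m3 unfolding hypergraph3_def has_berge_cycle_def
      by auto (metis less_le_trans zero_less_numeral)
    thus ?thesis by blast
  qed
  have "ex3_berge n m \<le> t_cycle m n + ex_cycle n m"
    unfolding ex3_berge_def using S ne finite_subset[OF S] by (auto simp: Max_le_iff)
  thus ?thesis unfolding m_def .
qed

end
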